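(* In the setting described in the context, suppose that $$\sum_{x\in A}\alpha_x<\sum_{y\in N(A)}\beta_y\qquad\text{for all nonempty } A\subseteq\mathcal X,$$ where $N(A)=\bigcup_{x\in A}N_x$. Then the graph $\mathcal L$ is connected.
   Context: $\mathcal X$ is a finite set of units, $\mathcal G=(\mathcal X,\mathcal E)$ a directed graph, $N_x=\{y:(x,y)\in\mathcal E\}$, $\alpha_x,\beta_x$ non-negative integers. An allocation state is a matrix $W\in\mathbb N^{\mathcal X\times\mathcal X}$ with $W_{xy}=0$ whenever $(x,y)\notin\mathcal E$, $W^x:=\sum_yW_{xy}=\alpha_x$ for all $x$, and $W_y:=\sum_xW_{xy}\le\beta_y$ for all $y$; $\mathcal W$ is the set of allocation states and $e_{xy}$ the matrix unit. $\mathcal L$ is the graph on $\mathcal W$ in which $W$ and $W'$ are adjacent iff $W'=W-e_{xy}+e_{xy'}$ for some $x$ and some $y\ne y'$ with $W_{xy}>0$, $y'\in N_x$, $W_{y'}<\beta_{y'}$ (these are exactly the positive-rate transitions of the paper's noisy best-response storage dynamics restricted to $\mathcal W$, under its standing assumption that unit activation rates are $\nu_x=\nu\alpha_x$ with $\nu>0$). *)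

theory Defs
  imports Main
begin

definition nbr :: "('a \<times> 'a) set \<Rightarrow> 'a \<Rightarrow> 'a set" where
  "nbr E x = {y. (x, y) \<in> E}"

definition nbr_set :: "('a \<times> 'a) set \<Rightarrow> 'a set \<Rightarrow> 'a set" where
  "nbr_set E A = (\<Union>x\<in>A. nbr E x)"

definition row_sum :: "'a set \<Rightarrow> ('a \<Rightarrow> 'a \<Rightarrow> nat) \<Rightarrow> 'a \<Rightarrow> nat" where
  "row_sum X W x = (\<Sum>y\<in>X. W x y)"

definition col_sum :: "'a set \<Rightarrow> ('a \<Rightarrow> 'a \<Rightarrow> nat) \<Rightarrow> 'a \<Rightarrow> nat" where
  "col_sum X W y = (\<Sum>x\<in>X. W x y)"

definition alloc_states ::
  "'a set \<Rightarrow> ('a \<times> 'a) set \<Rightarrow> ('a \<Rightarrow> nat) \<Rightarrow> ('a \<Rightarrow> nat) \<Rightarrow> ('a \<Rightarrow> 'a \<Rightarrow> nat) set" where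
  "alloc_states X E \<alpha> \<beta> = {W. (\<forall>x y. (x, y) \<notin> E \<longrightarrow> W x y = 0)
      \<and> (\<forall>x\<in>X. row_sum X W x = \<alpha> x)
      \<and> (\<forall>y\<in>X. col_sum X W y \<le> \<beta> y)}"

definition move :: "('a \<Rightarrow> 'a \<Rightarrow> nat) \<Rightarrow> 'a \<Rightarrow> 'a \<Rightarrow> 'a \<Rightarrow> 'a \<Rightarrow> 'a \<Rightarrow> nat" where
  "move W x y y' = (\<lambda>a b. if a = x \<and> b = y then W a b - 1
                           else if a = x \<and> b = y' then W a b + 1 else W a b)"

definition trans_step ::
  "'a set \<Rightarrow> ('a \<times> 'a) set \<Rightarrow> ('a \<Rightarrow> nat) \<Rightarrow> ('a \<Rightarrow> 'a \<Rightarrow> nat) \<Rightarrow> ('a \<Rightarrow> 'a \<Rightarrow> nat) \<Rightarrow> bool" where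
  "trans_step X E \<beta> W W' = (\<exists>x y y'. y \<noteq> y' \<and> W x y > 0 \<and> y' \<in> nbr E x
       \<and> col_sum X W y' < \<beta> y' \<and> W' = move W x y y')"

definition L_edges ::
  "'a set \<Rightarrow> ('a \<times> 'a) set \<Rightarrow> ('a \<Rightarrow> nat) \<Rightarrow> ('a \<Rightarrow> nat) \<Rightarrow> (('a \<Rightarrow> 'a \<Rightarrow> nat) \<times> ('a \<Rightarrow> 'a \<Rightarrow> nat)) set" where
  "L_edges X E \<alpha> \<beta> = {(W, W'). W \<in> alloc_states X E \<alpha> \<beta> \<and> W' \<in> alloc_states X E \<alpha> \<beta>
      \<and> (trans_step X E \<beta> W W' \<or> trans_step X E \<beta> W' W)}"

definition L_connected :: "'a set \<Rightarrow> ('a \<times> 'a) set \<Rightarrow> ('a \<Rightarrow> nat) \<Rightarrow> ('a \<Rightarrow> nat) \<Rightarrow> bool" where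
  "L_connected X E \<alpha> \<beta> = (\<forall>W\<in>alloc_states X E \<alpha> \<beta>. \<forall>W'\<in>alloc_states X E \<alpha> \<beta>.
      (W, W') \<in> (L_edges X E \<alpha> \<beta>)\<^sup>*)"

end

theory Submission
  imports Defs
begin



lemma sum_two:
  assumes "finite S" "a \<in> S" "b \<in> S" "a \<noteq> b"
  shows "sum f S = f a + f b + sum f (S - {a,b})"
proof -
  have "sum f S = f a + sum f (S - {a})" using assms by (simp add: sum.remove)
  also have "sum f (S - {a}) = f b + sum f (S - {a} - {b})" using assms by (simp add: sum.remove)
  also have "S - {a} - {b} = S - {a,b}" by auto
  finally show ?thesis by (simp add: add.assoc)
qed

lemma arith4: "(G::int) = F \<Longrightarrow> G = ga + gb + R \<Longrightarrow> F' = fa + fb + R \<Longrightarrow> F = F'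
   \<Longrightarrow> True" by simp

lemma arith5: "G = ga + gb + R \<Longrightarrow> F = fa + fb + (R::int) \<Longrightarrow> G + fa + fb = F + ga + gb"
  by simp

definition distI :: "'a set \<Rightarrow> ('a \<Rightarrow> 'a \<Rightarrow> nat) \<Rightarrow> ('a \<Rightarrow> 'a \<Rightarrow> nat) \<Rightarrow> int" where
  "distI X V V' = (\<Sum>p\<in>X \<times> X. \<bar>int (V (fst p) (snd p)) - int (V' (fst p) (snd p))\<bar>)"

fun fr :: "'a set \<Rightarrow> ('a \<times> 'a) set \<Rightarrow> ('a \<Rightarrow> nat) \<Rightarrow> ('a \<Rightarrow> 'a \<Rightarrow> nat) \<Rightarrow> ('a \<Rightarrow> 'a \<Rightarrow> nat) \<Rightarrow> nat \<Rightarrow> 'a set" where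
  "fr X E \<beta> W W' 0 = {c\<in>X. col_sum X W c < \<beta> c \<and> col_sum X W' c < \<beta> c}"
| "fr X E \<beta> W W' (Suc k) = fr X E \<beta> W W' k \<union>
     {c\<in>X. \<exists>z c'. 0 < W z c \<and> 0 < W' z c \<and> c' \<in> nbr E z \<and> c' \<in> fr X E \<beta> W W' k}"

lemma fr_sub: "fr X E \<beta> W W' k \<subseteq> X"
  by (induction k) auto

locale setting =
  fixes X :: "'a set" and E :: "('a \<times> 'a) set" and \<alpha> \<beta> :: "'a \<Rightarrow> nat"
  assumes finX: "finite X" and EX: "E \<subseteq> X \<times> X"
begin

abbreviation "St \<equiv> alloc_states X E \<alpha> \<beta>"
abbreviation "LE \<equiv> L_edges X E \<alpha> \<beta>"

lemma st_pos:
  assumes "V \<in> St" "0 < V x y" shows "(x,y) \<in> E \<and> x \<in> X \<and> y \<in> X"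
proof -
  have "(x,y) \<in> E"
  proof (rule ccontr)
    assume "(x,y) \<notin> E"
    then have "V x y = 0" using assms(1) unfolding alloc_states_def by blast
    then show False using assms(2) by simp
  qed
  then show ?thesis using EX by blast
qed

lemma st_row: "V \<in> St \<Longrightarrow> x \<in> X \<Longrightarrow> row_sum X V x = \<alpha> x"
  unfolding alloc_states_def by auto

lemma st_col: "V \<in> St \<Longrightarrow> y \<in> X \<Longrightarrow> col_sum X V y \<le> \<beta> y"
  unfolding alloc_states_def by auto

lemma col_move_other: "y \<noteq> a \<Longrightarrow> y \<noteq> b \<Longrightarrow> col_sum X (move V x a b) y = col_sum X V y"
  unfolding col_sum_def move_def by auto

lemma col_move_a:
  assumes "x \<in> X" "a \<noteq> b" "0 < V x a"
  shows "col_sum X (move V x a b) a = col_sum X V a - 1"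
proof -
  have 1: "col_sum X V a = V x a + (\<Sum>p\<in>X-{x}. V p a)"
    unfolding col_sum_def using assms finX by (simp add: sum.remove)
  have 2: "col_sum X (move V x a b) a = (V x a - 1) + (\<Sum>p\<in>X-{x}. move V x a b p a)"
    unfolding col_sum_def using assms finX by (simp add: sum.remove move_def)
  have 3: "(\<Sum>p\<in>X-{x}. move V x a b p a) = (\<Sum>p\<in>X-{x}. V p a)"
    by (rule sum.cong) (auto simp: move_def)
  show ?thesis using 1 2 3 assms by simp
qed

lemma col_move_b:
  assumes "x \<in> X" "a \<noteq> b"
  shows "col_sum X (move V x a b) b = col_sum X V b + 1"
proof -
  have 1: "col_sum X V b = V x b + (\<Sum>p\<in>X-{x}. V p b)"
    unfolding col_sum_def using assms finX by (simp add: sum.remove)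
  have 2: "col_sum X (move V x a b) b = (V x b + 1) + (\<Sum>p\<in>X-{x}. move V x a b p b)"
    unfolding col_sum_def using assms finX by (simp add: sum.remove move_def)
  have 3: "(\<Sum>p\<in>X-{x}. move V x a b p b) = (\<Sum>p\<in>X-{x}. V p b)"
    by (rule sum.cong) (auto simp: move_def)
  show ?thesis using 1 2 3 assms by simp
qed

lemma row_move:
  assumes "a \<in> X" "b \<in> X" "a \<noteq> b" "0 < V x a"
  shows "row_sum X (move V x a b) p = row_sum X V p"
proof (cases "p = x")
  case False
  then show ?thesis unfolding row_sum_def move_def by auto
next
  case True
  have 1: "row_sum X V p = V p a + V p b + (\<Sum>q\<in>X-{a,b}. V p q)"
    unfolding row_sum_def using assms finX by (simp add: sum_two)
  have 2: "row_sum X (move V x a b) p = move V x a b p a + move V x a b p b + (\<Sum>q\<in>X-{a,b}. move V x a b p q)"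
    unfolding row_sum_def using assms finX by (simp add: sum_two)
  have 3: "(\<Sum>q\<in>X-{a,b}. move V x a b p q) = (\<Sum>q\<in>X-{a,b}. V p q)"
    by (rule sum.cong) (auto simp: move_def)
  show ?thesis using 1 2 3 assms True by (simp add: move_def)
qed

lemma move_state:
  assumes "V \<in> St" "0 < V x a" "b \<in> nbr E x" "a \<noteq> b" "col_sum X V b < \<beta> b"
  shows "move V x a b \<in> St \<and> (V, move V x a b) \<in> LE"
proof -
  have xa: "(x,a) \<in> E" "x \<in> X" "a \<in> X" using st_pos assms by auto
  have xb: "(x,b) \<in> E" "b \<in> X" using assms EX unfolding nbr_def by auto
  have "move V x a b \<in> St"
    unfolding alloc_states_def
  proof (intro CollectI conjI allI impI ballI)
    fix p q assume "(p,q) \<notin> E"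
    then show "move V x a b p q = 0" using assms(1) xa xb unfolding alloc_states_def move_def by auto
  next
    fix p assume "p \<in> X"
    then show "row_sum X (move V x a b) p = \<alpha> p" using row_move[where V=V and x=x, OF xa(3) xb(2) assms(4,2)] st_row assms(1) by simp
  next
    fix q assume q: "q \<in> X"
    show "col_sum X (move V x a b) q \<le> \<beta> q"
    proof -
      consider "q = a" | "q = b" | "q \<noteq> a \<and> q \<noteq> b" by blast
      then show ?thesis
      proof cases
        case 1 then show ?thesis using col_move_a[where V=V and b=b, OF xa(2) assms(4,2)] st_col[OF assms(1) q] by simp
      next
        case 2 then show ?thesis using col_move_b[where V=V, OF xa(2) assms(4)] assms(5) by simp
      next
        case 3 then show ?thesis using col_move_other st_col[OF assms(1) q] by simp
      qed
    qed
  qed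
  moreover have "trans_step X E \<beta> V (move V x a b)"
    unfolding trans_step_def using assms by blast
  ultimately show ?thesis using assms(1) unfolding L_edges_def by auto
qed

lemma sym_LE: "sym LE"
  unfolding sym_def L_edges_def by auto

lemma rt_sym: "(a,b) \<in> LE\<^sup>* \<Longrightarrow> (b,a) \<in> LE\<^sup>*"
  using sym_LE sym_rtrancl unfolding sym_def by blast

lemma distI_sym: "distI X V V' = distI X V' V"
  unfolding distI_def by (simp add: abs_minus_commute)

lemma distI_eq:
  assumes "\<forall>x y. V x y + W' x y = V' x y + W x y"
  shows "distI X V V' = distI X W W'"
  unfolding distI_def
proof (rule sum.cong)
  fix p assume "p \<in> X \<times> X"
  have "int (V (fst p) (snd p)) + int (W' (fst p) (snd p)) = int (V' (fst p) (snd p)) + int (W (fst p) (snd p))"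
    using assms by (metis of_nat_add)
  then have "int (V (fst p) (snd p)) - int (V' (fst p) (snd p)) = int (W (fst p) (snd p)) - int (W' (fst p) (snd p))"
    by linarith
  then show "\<bar>int (V (fst p) (snd p)) - int (V' (fst p) (snd p))\<bar> = \<bar>int (W (fst p) (snd p)) - int (W' (fst p) (snd p))\<bar>"
    by simp
qed simp

lemma dist_move:
  assumes "x \<in> X" "a \<in> X" "b \<in> X" "a \<noteq> b" "0 < V x a"
  shows "distI X (move V x a b) V' + \<bar>int (V x a) - int (V' x a)\<bar> + \<bar>int (V x b) - int (V' x b)\<bar>
       = distI X V V' + \<bar>int (V x a) - 1 - int (V' x a)\<bar> + \<bar>int (V x b) + 1 - int (V' x b)\<bar>"
proof -
  let ?f = "\<lambda>p. \<bar>int (V (fst p) (snd p)) - int (V' (fst p) (snd p))\<bar>"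
  let ?g = "\<lambda>p. \<bar>int (move V x a b (fst p) (snd p)) - int (V' (fst p) (snd p))\<bar>"
  have fin: "finite (X \<times> X)" using finX by simp
  have ne: "(x,a) \<noteq> (x,b)" using assms by simp
  have 1: "sum ?f (X\<times>X) = ?f (x,a) + ?f (x,b) + sum ?f (X\<times>X - {(x,a),(x,b)})"
    by (rule sum_two[OF fin _ _ ne]) (use assms in auto)
  have 2: "sum ?g (X\<times>X) = ?g (x,a) + ?g (x,b) + sum ?g (X\<times>X - {(x,a),(x,b)})"
    by (rule sum_two[OF fin _ _ ne]) (use assms in auto)
  have 3: "sum ?g (X\<times>X - {(x,a),(x,b)}) = sum ?f (X\<times>X - {(x,a),(x,b)})"
  proof (rule sum.cong)
    fix p assume "p \<in> X\<times>X - {(x,a),(x,b)}"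
    then have "move V x a b (fst p) (snd p) = V (fst p) (snd p)"
      unfolding move_def by (cases p) auto
    then show "?g p = ?f p" by simp
  qed simp
  have m1: "move V x a b x a = V x a - 1" unfolding move_def by simp
  have m2: "move V x a b x b = V x b + 1" unfolding move_def using assms(4) by simp
  have 4: "\<bar>int (move V x a b x a) - int (V' x a)\<bar> = \<bar>int (V x a) - 1 - int (V' x a)\<bar>" using assms(5) m1 by (simp add: of_nat_diff)
  have 5: "\<bar>int (move V x a b x b) - int (V' x b)\<bar> = \<bar>int (V x b) + 1 - int (V' x b)\<bar>" using m2 by simp
  have A1: "distI X (move V x a b) V' = \<bar>int (V x a) - 1 - int (V' x a)\<bar> + \<bar>int (V x b) + 1 - int (V' x b)\<bar> + sum ?f (X\<times>X - {(x,a),(x,b)})"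
    unfolding distI_def 2 3 fst_conv snd_conv 4 5 by (rule refl)
  have A2: "distI X V V' = \<bar>int (V x a) - int (V' x a)\<bar> + \<bar>int (V x b) - int (V' x b)\<bar> + sum ?f (X\<times>X - {(x,a),(x,b)})"
    unfolding distI_def 1 fst_conv snd_conv by (rule refl)
  show ?thesis by (rule arith5[OF A1 A2])
qed

end



context setting begin

lemma fr_mono: "fr X E \<beta> W W' k \<subseteq> fr X E \<beta> W W' (Suc k)"
  by auto

lemma col_eq: "(\<And>x. V x c = W x c) \<Longrightarrow> col_sum X V c = col_sum X W c"
  unfolding col_sum_def by simp

lemma col_pos: "x \<in> X \<Longrightarrow> 0 < V x c \<Longrightarrow> 0 < col_sum X V c"
  unfolding col_sum_def using finX
  by (metis gr0I member_le_sum not_le zero_le)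

lemma JC:
  assumes W: "W \<in> St" and W': "W' \<in> St"
  shows "c \<in> fr X E \<beta> W W' k \<Longrightarrow> \<exists>V V'. V \<in> St \<and> V' \<in> St \<and> (W,V) \<in> LE\<^sup>* \<and> (W',V') \<in> LE\<^sup>*
     \<and> (\<forall>x y. V x y + W' x y = V' x y + W x y) \<and> col_sum X V c < \<beta> c \<and> col_sum X V' c < \<beta> c
     \<and> (\<forall>x y. y \<notin> fr X E \<beta> W W' k \<longrightarrow> V x y = W x y \<and> V' x y = W' x y)"
proof (induction k arbitrary: c)
  case 0
  then show ?case using W W' by (intro exI[of _ W] exI[of _ W']) auto
next
  case (Suc k)
  show ?case
  proof (cases "c \<in> fr X E \<beta> W W' k")
    case True
    from Suc.IH[OF True] obtain V V' where VV: "V \<in> St" "V' \<in> St" "(W,V) \<in> LE\<^sup>*" "(W',V') \<in> LE\<^sup>*"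
      "\<forall>x y. V x y + W' x y = V' x y + W x y" "col_sum X V c < \<beta> c" "col_sum X V' c < \<beta> c"
      "\<forall>x y. y \<notin> fr X E \<beta> W W' k \<longrightarrow> V x y = W x y \<and> V' x y = W' x y" by blast
    show ?thesis
      by (rule exI[of _ V], rule exI[of _ V']) (use VV fr_mono[of W W' k] in blast)
  next
    case False
    with Suc.prems obtain z c' where zc: "c \<in> X" "0 < W z c" "0 < W' z c" "c' \<in> nbr E z"
      "c' \<in> fr X E \<beta> W W' k" by auto
    have cc: "c \<noteq> c'" using False zc by auto
    have zX: "z \<in> X" using st_pos[OF W zc(2)] by simp
    from Suc.IH[OF zc(5)] obtain V V' where VV: "V \<in> St" "V' \<in> St" "(W,V) \<in> LE\<^sup>*" "(W',V') \<in> LE\<^sup>*"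
      and eq: "\<forall>x y. V x y + W' x y = V' x y + W x y" and h: "col_sum X V c' < \<beta> c'" "col_sum X V' c' < \<beta> c'"
      and ag: "\<forall>x y. y \<notin> fr X E \<beta> W W' k \<longrightarrow> V x y = W x y \<and> V' x y = W' x y" by blast
    have agc: "\<And>x. V x c = W x c" "\<And>x. V' x c = W' x c" using ag False by auto
    have p: "0 < V z c" "0 < V' z c" using agc zc by auto
    have m: "move V z c c' \<in> St \<and> (V, move V z c c') \<in> LE"
      using move_state[OF VV(1) p(1) zc(4) cc h(1)] .
    have m': "move V' z c c' \<in> St \<and> (V', move V' z c c') \<in> LE"
      using move_state[OF VV(2) p(2) zc(4) cc h(2)] .
    have c1: "col_sum X (move V z c c') c < \<beta> c"
    proof -
      have "col_sum X (move V z c c') c = col_sum X V c - 1"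
        using col_move_a[where V=V and b=c', OF zX cc p(1)] .
      moreover have "col_sum X V c = col_sum X W c" using col_eq agc by metis
      moreover have "0 < col_sum X W c" using col_pos[where V=W, OF zX zc(2)] .
      moreover have "col_sum X W c \<le> \<beta> c" using st_col[OF W zc(1)] .
      ultimately show ?thesis by linarith
    qed
    have c2: "col_sum X (move V' z c c') c < \<beta> c"
    proof -
      have "col_sum X (move V' z c c') c = col_sum X V' c - 1"
        using col_move_a[where V=V' and b=c', OF zX cc p(2)] .
      moreover have "col_sum X V' c = col_sum X W' c" using col_eq agc by metis
      moreover have "0 < col_sum X W' c" using col_pos[where V=W', OF zX zc(3)] .
      moreover have "col_sum X W' c \<le> \<beta> c" using st_col[OF W' zc(1)] .
      ultimately show ?thesis by linarith
    qed
    have eq2: "\<forall>x y. move V z c c' x y + W' x y = move V' z c c' x y + W x y"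
    proof (intro allI)
      fix x y
      have "V x y + W' x y = V' x y + W x y" using eq by blast
      then show "move V z c c' x y + W' x y = move V' z c c' x y + W x y"
        unfolding move_def using p by auto
    qed
    have ag2: "\<forall>x y. y \<notin> fr X E \<beta> W W' (Suc k) \<longrightarrow> move V z c c' x y = W x y \<and> move V' z c c' x y = W' x y"
    proof (intro allI impI)
      fix x y assume y: "y \<notin> fr X E \<beta> W W' (Suc k)"
      have cin: "c \<in> fr X E \<beta> W W' (Suc k)" using Suc.prems .
      have cin2: "c' \<in> fr X E \<beta> W W' (Suc k)" using zc(5) fr_mono[of W W' k] by blast
      have "y \<noteq> c" "y \<noteq> c'" "y \<notin> fr X E \<beta> W W' k" using y cin cin2 fr_mono[of W W' k] by blast+
      then show "move V z c c' x y = W x y \<and> move V' z c c' x y = W' x y"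
        unfolding move_def using ag by auto
    qed
    show ?thesis
      apply (rule exI[of _ "move V z c c'"], rule exI[of _ "move V' z c c'"])
      using m m' VV(3,4) eq2 c1 c2 ag2 by (meson rtrancl_into_rtrancl)
  qed
qed

end



context setting begin

lemma row_eq: "V \<in> St \<Longrightarrow> V' \<in> St \<Longrightarrow> w \<in> X \<Longrightarrow> (\<Sum>y\<in>X. V w y) = (\<Sum>y\<in>X. V' w y)"
  using st_row[of V w] st_row[of V' w] unfolding row_sum_def by simp

lemma exists_gt_row:
  assumes "V \<in> St" "V' \<in> St" "V w c < V' w c"
  shows "\<exists>c''\<in>X. V' w c'' < V w c''"
proof (rule ccontr)
  assume "\<not> ?thesis"
  then have le: "\<forall>y\<in>X. V w y \<le> V' w y" by auto
  have "0 < V' w c" using assms(3) by simp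
  then have wc: "w \<in> X" "c \<in> X" using st_pos[OF assms(2)] by auto
  have "(\<Sum>y\<in>X. V w y) < (\<Sum>y\<in>X. V' w y)"
    using sum_strict_mono_ex1[OF finX le] wc assms(3) by blast
  then show False using row_eq[OF assms(1,2) wc(1)] by simp
qed

lemma exists_gt_col:
  assumes "col_sum X V c \<le> col_sum X V' c" "z \<in> X" "V' z c < V z c"
  shows "\<exists>w\<in>X. V w c < V' w c"
proof (rule ccontr)
  assume "\<not> ?thesis"
  then have le: "\<forall>w\<in>X. V' w c \<le> V w c" by auto
  have "(\<Sum>w\<in>X. V' w c) < (\<Sum>w\<in>X. V w c)"
    using sum_strict_mono_ex1[OF finX le] assms(2,3) by blast
  then show False using assms(1) unfolding col_sum_def by simp
qed

lemma good:
  assumes V: "V \<in> St" and V': "V' \<in> St" and h: "col_sum X V c < \<beta> c" and w: "V w c < V' w c"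
  shows "\<exists>V2. V2 \<in> St \<and> (V,V2) \<in> LE \<and> distI X V2 V' < distI X V V'"
proof -
  have "0 < V' w c" using w by simp
  then have wc: "(w,c) \<in> E" "w \<in> X" "c \<in> X" using st_pos[OF V'] by auto
  obtain c'' where c'': "c'' \<in> X" "V' w c'' < V w c''" using exists_gt_row[OF V V' w] by blast
  have ne: "c'' \<noteq> c" using c'' w by auto
  have pos: "0 < V w c''" using c'' by simp
  have nb: "c \<in> nbr E w" using wc unfolding nbr_def by simp
  have m: "move V w c'' c \<in> St \<and> (V, move V w c'' c) \<in> LE"
    using move_state[OF V pos nb ne h] .
  have d: "distI X (move V w c'' c) V' + \<bar>int (V w c'') - int (V' w c'')\<bar> + \<bar>int (V w c) - int (V' w c)\<bar>
       = distI X V V' + \<bar>int (V w c'') - 1 - int (V' w c'')\<bar> + \<bar>int (V w c) + 1 - int (V' w c)\<bar>"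
    using dist_move[where V=V and V'=V', OF wc(2) c''(1) wc(3) ne pos] .
  have e1: "\<bar>int (V w c'') - 1 - int (V' w c'')\<bar> = \<bar>int (V w c'') - int (V' w c'')\<bar> - 1" using c'' by simp
  have e2: "\<bar>int (V w c) + 1 - int (V' w c)\<bar> = \<bar>int (V w c) - int (V' w c)\<bar> - 1" using w by simp
  have "distI X (move V w c'' c) V' < distI X V V'" using d e1 e2 by linarith
  then show ?thesis using m by blast
qed

lemma distI_nonneg: "0 \<le> distI X V V'"
  unfolding distI_def by (simp add: sum_nonneg)

end



context setting begin

lemma main:
  assumes hall: "\<forall>A. A \<subseteq> X \<and> A \<noteq> {} \<longrightarrow> sum \<alpha> A < sum \<beta> (nbr_set E A)"
  shows "W \<in> St \<Longrightarrow> W' \<in> St \<Longrightarrow> (W,W') \<in> LE\<^sup>*"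
proof (induction "nat (distI X W W')" arbitrary: W W' rule: less_induct)
  case less
  note W = less.prems(1) and W' = less.prems(2)
  have IH: "\<And>V V'. distI X V V' < distI X W W' \<Longrightarrow> V \<in> St \<Longrightarrow> V' \<in> St \<Longrightarrow> (V,V') \<in> LE\<^sup>*"
  proof -
    fix V V' assume a: "distI X V V' < distI X W W'" "V \<in> St" "V' \<in> St"
    have "nat (distI X V V') < nat (distI X W W')" using a(1) distI_nonneg[of V V'] by simp
    then show "(V,V') \<in> LE\<^sup>*" using less.hyps a(2,3) by blast
  qed
  show ?case
  proof (cases "W = W'")
    case True then show ?thesis by simp
  next
    case neq: False
    show ?thesis
    proof (cases "\<exists>c w. c \<in> X \<and> col_sum X W c < \<beta> c \<and> W w c < W' w c")
      case True
      then obtain c w where cw: "col_sum X W c < \<beta> c" "W w c < W' w c" by blast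
      obtain V2 where V2: "V2 \<in> St" "(W,V2) \<in> LE" "distI X V2 W' < distI X W W'"
        using good[OF W W' cw] by blast
      have "(V2,W') \<in> LE\<^sup>*" using IH[OF V2(3) V2(1) W'] .
      then show ?thesis using V2(2) by (meson converse_rtrancl_into_rtrancl)
    next
      case notA: False
      show ?thesis
      proof (cases "\<exists>c w. c \<in> X \<and> col_sum X W' c < \<beta> c \<and> W' w c < W w c")
        case True
        then obtain c w where cw: "col_sum X W' c < \<beta> c" "W' w c < W w c" by blast
        obtain V2 where V2: "V2 \<in> St" "(W',V2) \<in> LE" "distI X V2 W < distI X W' W"
          using good[OF W' W cw] by blast
        have "distI X W V2 < distI X W W'" using V2(3) distI_sym by metis
        then have "(W,V2) \<in> LE\<^sup>*" using IH W V2(1) by blast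
        moreover have "(V2,W') \<in> LE\<^sup>*" using rt_sym V2(2) by blast
        ultimately show ?thesis by (meson rtrancl_trans)
      next
        case notB: False
        have colle: "\<And>z c. W' z c < W z c \<Longrightarrow> col_sum X W c \<le> col_sum X W' c"
        proof -
          fix z c assume a: "W' z c < W z c"
          then have "0 < W z c" by simp
          then have cX: "c \<in> X" using st_pos[OF W] by blast
          then have "\<not> col_sum X W' c < \<beta> c" using notB a by blast
          then show "col_sum X W c \<le> col_sum X W' c" using st_col[OF W cX] by linarith
        qed
        have gtw: "\<And>z c. W' z c < W z c \<Longrightarrow> \<exists>w\<in>X. W w c < W' w c"
        proof -
          fix z c assume a: "W' z c < W z c"
          then have "0 < W z c" by simp
          then have zX: "z \<in> X" using st_pos[OF W] by blast
          show "\<exists>w\<in>X. W w c < W' w c" using exists_gt_col[OF colle[OF a] zX a] .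
        qed
        show ?thesis
        proof (cases "\<exists>z c k. W' z c < W z c \<and> c \<in> fr X E \<beta> W W' k")
          case True
          then obtain z c k where zc: "W' z c < W z c" "c \<in> fr X E \<beta> W W' k" by blast
          obtain V V' where VV: "V \<in> St" "V' \<in> St" "(W,V) \<in> LE\<^sup>*" "(W',V') \<in> LE\<^sup>*"
            and eq: "\<forall>x y. V x y + W' x y = V' x y + W x y" and h: "col_sum X V c < \<beta> c"
            using JC[OF W W' zc(2)] by blast
          obtain w where w: "W w c < W' w c" using gtw[OF zc(1)] by blast
          have "V w c + W' w c = V' w c + W w c" using eq by blast
          then have w2: "V w c < V' w c" using w by linarith
          obtain V2 where V2: "V2 \<in> St" "(V,V2) \<in> LE" "distI X V2 V' < distI X V V'"
            using good[OF VV(1,2) h w2] by blast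
          have "distI X V V' = distI X W W'" using distI_eq[OF eq] .
          then have "(V2,V') \<in> LE\<^sup>*" using IH V2 VV(2) by simp
          moreover have "(V',W') \<in> LE\<^sup>*" using rt_sym VV(4) by blast
          ultimately show ?thesis using VV(3) V2(2) by (meson rtrancl_trans rtrancl_into_rtrancl)
        next
          case notC1: False
          show ?thesis
          proof (cases "\<exists>z c c' k. W' z c < W z c \<and> c' \<in> nbr E z \<and> c' \<in> fr X E \<beta> W W' k")
            case True
            then obtain z c c' k where zc: "W' z c < W z c" "c' \<in> nbr E z" "c' \<in> fr X E \<beta> W W' k" by blast
            have cnot: "c \<notin> fr X E \<beta> W W' k" using notC1 zc(1) by blast
            have "0 < W z c" using zc(1) by simp
            then have zX: "z \<in> X" and cX: "c \<in> X" using st_pos[OF W] by blast+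
            have c'X: "c' \<in> X" using zc(2) EX unfolding nbr_def by auto
            have cc: "c \<noteq> c'" using cnot zc(3) by auto
            obtain V V' where VV: "V \<in> St" "V' \<in> St" "(W,V) \<in> LE\<^sup>*" "(W',V') \<in> LE\<^sup>*"
              and eq: "\<forall>x y. V x y + W' x y = V' x y + W x y" and h: "col_sum X V c' < \<beta> c'"
              and ag: "\<forall>x y. y \<notin> fr X E \<beta> W W' k \<longrightarrow> V x y = W x y \<and> V' x y = W' x y"
              using JC[OF W W' zc(3)] by blast
            have agc: "\<And>x. V x c = W x c" "\<And>x. V' x c = W' x c" using ag cnot by auto
            have pos: "0 < V z c" using agc zc(1) by simp
            have m: "move V z c c' \<in> St \<and> (V, move V z c c') \<in> LE"
              using move_state[OF VV(1) pos zc(2) cc h] .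
            have d: "distI X (move V z c c') V' + \<bar>int (V z c) - int (V' z c)\<bar> + \<bar>int (V z c') - int (V' z c')\<bar>
               = distI X V V' + \<bar>int (V z c) - 1 - int (V' z c)\<bar> + \<bar>int (V z c') + 1 - int (V' z c')\<bar>"
              using dist_move[where V=V and V'=V', OF zX cX c'X cc pos] .
            have gt: "V' z c < V z c" using agc zc(1) by simp
            have e1: "\<bar>int (V z c) - 1 - int (V' z c)\<bar> = \<bar>int (V z c) - int (V' z c)\<bar> - 1" using gt by simp
            have e2: "\<bar>int (V z c') + 1 - int (V' z c')\<bar> \<le> \<bar>int (V z c') - int (V' z c')\<bar> + 1" by simp
            have dle: "distI X (move V z c c') V' \<le> distI X V V'" using d e1 e2 by linarith
            have h2: "col_sum X (move V z c c') c < \<beta> c"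
            proof -
              have "col_sum X (move V z c c') c = col_sum X V c - 1"
                using col_move_a[where V=V and b=c', OF zX cc pos] .
              moreover have "col_sum X V c = col_sum X W c" using col_eq agc by metis
              moreover have "0 < col_sum X W c" using col_pos[where V=W, OF zX] zc(1) by simp
              moreover have "col_sum X W c \<le> \<beta> c" using st_col[OF W cX] .
              ultimately show ?thesis by linarith
            qed
            obtain w where w: "W w c < W' w c" using gtw[OF zc(1)] by blast
            have "move V z c c' w c \<le> V w c" unfolding move_def using cc by auto
            then have w2: "move V z c c' w c < V' w c" using agc w by simp
            obtain V3 where V3: "V3 \<in> St" "(move V z c c',V3) \<in> LE" "distI X V3 V' < distI X (move V z c c') V'"
              using good[OF conjunct1[OF m] VV(2) h2 w2] by blast
            have "distI X V V' = distI X W W'" using distI_eq[OF eq] .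
            then have "distI X V3 V' < distI X W W'" using V3(3) dle by linarith
            then have "(V3,V') \<in> LE\<^sup>*" using IH V3(1) VV(2) by blast
            moreover have "(V',W') \<in> LE\<^sup>*" using rt_sym VV(4) by blast
            moreover have "(W, V3) \<in> LE\<^sup>*" using VV(3) conjunct2[OF m] V3(2) by (meson rtrancl_into_rtrancl)
            ultimately show ?thesis by (meson rtrancl_trans)
          next
            case notC2: False
            define Fr where "Fr = {c. \<exists>k. c \<in> fr X E \<beta> W W' k}"
            define U where "U = X - Fr"
            define S where "S = {z \<in> X. \<exists>c\<in>U. 0 < W z c}"
            define N where "N = nbr_set E S"
            have full: "\<And>c. c \<in> U \<Longrightarrow> col_sum X W c = \<beta> c"
            proof -
              fix c assume c: "c \<in> U"
              then have cX: "c \<in> X" and cF: "c \<notin> Fr" unfolding U_def by auto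
              have cn: "c \<notin> fr X E \<beta> W W' 0" using cF unfolding Fr_def by blast
              show "col_sum X W c = \<beta> c"
              proof (rule ccontr)
                assume "col_sum X W c \<noteq> \<beta> c"
                then have lt: "col_sum X W c < \<beta> c" using st_col[OF W cX] by simp
                then have "\<not> col_sum X W' c < \<beta> c" using cn cX by simp
                then have lt2: "col_sum X W c < col_sum X W' c" using lt by simp
                have "\<exists>w\<in>X. W w c < W' w c"
                proof (rule ccontr)
                  assume "\<not> ?thesis"
                  then have "\<forall>w\<in>X. W' w c \<le> W w c" by auto
                  then have "col_sum X W' c \<le> col_sum X W c" unfolding col_sum_def by (simp add: sum_mono)
                  then show False using lt2 by simp
                qed
                then show False using notA lt cX by blast
              qed
            qed
            have NX: "N \<subseteq> X" unfolding N_def nbr_set_def nbr_def using EX by auto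
            have NU: "N \<subseteq> U"
            proof
              fix y assume "y \<in> N"
              then obtain z where z: "z \<in> S" "y \<in> nbr E z" unfolding N_def nbr_set_def by auto
              then obtain c where c: "c \<in> U" "0 < W z c" "z \<in> X" unfolding S_def by auto
              have yX: "y \<in> X" using z(2) EX unfolding nbr_def by auto
              have cX: "c \<in> X" and cF: "c \<notin> Fr" using c(1) unfolding U_def by auto
              have "y \<notin> Fr"
              proof
                assume "y \<in> Fr"
                then obtain k where k: "y \<in> fr X E \<beta> W W' k" unfolding Fr_def by auto
                show False
                proof (cases "0 < W' z c")
                  case True
                  then have "c \<in> fr X E \<beta> W W' (Suc k)" using cX c(2) z(2) k by auto
                  then show False using cF unfolding Fr_def by blast
                next
                  case False
                  then have "W' z c < W z c" using c(2) by simp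
                  then show False using notC2 z(2) k by blast
                qed
              qed
              then show "y \<in> U" using yX unfolding U_def by simp
            qed
            have Sne: "S \<noteq> {}"
            proof -
              obtain x y where xy: "W x y \<noteq> W' x y" using neq by blast
              have "\<exists>z c. W' z c < W z c"
              proof (cases "W' x y < W x y")
                case True then show ?thesis by blast
              next
                case False
                then have "W x y < W' x y" using xy by simp
                then show ?thesis using exists_gt_row[OF W W'] by blast
              qed
              then obtain z c where zc: "W' z c < W z c" by blast
              then have p: "0 < W z c" by simp
              then have zX: "z \<in> X" and cX: "c \<in> X" using st_pos[OF W] by blast+
              have "c \<notin> Fr" using notC1 zc unfolding Fr_def by blast
              then have "c \<in> U" using cX unfolding U_def by simp
              then have "z \<in> S" using zX p unfolding S_def by blast
              then show ?thesis by blast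
            qed
            have SX: "S \<subseteq> X" unfolding S_def by auto
            have finN: "finite N" using NX finX finite_subset by blast
            have finS: "finite S" using SX finX finite_subset by blast
            have z0: "\<forall>z\<in>X - S. (\<Sum>c\<in>N. W z c) = 0"
            proof
              fix z assume z: "z \<in> X - S"
              have "\<forall>c\<in>N. W z c = 0"
              proof
                fix c assume "c \<in> N"
                then have "c \<in> U" using NU by blast
                then show "W z c = 0" using z unfolding S_def by auto
              qed
              then show "(\<Sum>c\<in>N. W z c) = 0" by simp
            qed
            have "sum \<beta> N = (\<Sum>c\<in>N. col_sum X W c)"
              using full NU by (intro sum.cong) auto
            also have "\<dots> = (\<Sum>c\<in>N. \<Sum>z\<in>X. W z c)" unfolding col_sum_def by simp
            also have "\<dots> = (\<Sum>z\<in>X. \<Sum>c\<in>N. W z c)" by (rule sum.swap)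
            also have "\<dots> = (\<Sum>z\<in>S. \<Sum>c\<in>N. W z c)"
              by (rule sum.mono_neutral_right[OF finX SX z0])
            also have "\<dots> \<le> (\<Sum>z\<in>S. \<Sum>c\<in>X. W z c)"
              by (rule sum_mono, rule sum_mono2[OF finX NX]) simp
            also have "\<dots> = sum \<alpha> S"
              using st_row[OF W] SX unfolding row_sum_def by (intro sum.cong) auto
            finally have "sum \<beta> N \<le> sum \<alpha> S" .
            moreover have "sum \<alpha> S < sum \<beta> N" using hall SX Sne unfolding N_def by blast
            ultimately show ?thesis by simp
          qed
        qed
      qed
    qed
  qed
qed

end

theorem proposition3:
  fixes X :: "'a set" and E :: "('a \<times> 'a) set" and \<alpha> \<beta> :: "'a \<Rightarrow> nat"
  assumes "finite X"
    and "E \<subseteq> X \<times> X"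
    and "\<forall>A. A \<subseteq> X \<and> A \<noteq> {} \<longrightarrow> (\<Sum>x\<in>A. \<alpha> x) < (\<Sum>y\<in>nbr_set E A. \<beta> y)"
  shows "L_connected X E \<alpha> \<beta>"
proof -
  interpret setting X E \<alpha> \<beta> using assms(1,2) by unfold_locales
  show ?thesis unfolding L_connected_def using main[OF assms(3)] by blast
qed


end
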